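(* Let $X$ be a Banach lattice and $S$ a convex $C_0$-semigroup on $X$. Then the map $[0,\infty)\to X$, $t\mapsto S(t)x$ is continuous for every $x\in X$.
   Context: An operator $T\colon X\to X$ is convex if $T(\lambda x+(1-\lambda)y)\le\lambda Tx+(1-\lambda)Ty$ for all $x,y\in X$, $\lambda\in[0,1]$, and bounded if $\sup_{\|x\|\le r}\|Tx\|<\infty$ for all $r>0$. A convex $C_0$-semigroup is a family $(S(t))_{t\ge0}$ of bounded convex operators $X\to X$ with $S(0)=\mathrm{id}$, $S(t+s)=S(t)S(s)$ for all $s,t\ge0$, and $S(t)x\to x$ as $t\downarrow0$ for all $x$. *)

theory Defs
  imports "HOL-Analysis.Analysis"
begin

class banach_lattice = banach + ordered_real_vector + lattice +
  assumes norm_lattice_mono: "sup x (- x) \<le> sup y (- y) \<Longrightarrow> norm x \<le> norm y"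

definition convex_op :: "('a::{real_vector, ord} \<Rightarrow> 'a) \<Rightarrow> bool" where
  "convex_op T \<longleftrightarrow> (\<forall>x y. \<forall>l::real. 0 \<le> l \<and> l \<le> 1 \<longrightarrow>
      T (l *\<^sub>R x + (1 - l) *\<^sub>R y) \<le> l *\<^sub>R T x + (1 - l) *\<^sub>R T y)"

definition bounded_op :: "('a::real_normed_vector \<Rightarrow> 'b::real_normed_vector) \<Rightarrow> bool" where
  "bounded_op T \<longleftrightarrow> (\<forall>r>0. \<exists>M. \<forall>x. norm x \<le> r \<longrightarrow> norm (T x) \<le> M)"

text \<open>Convex C_0-semigroup, indexed by t \<ge> 0 (values of S at negative t are irrelevant).\<close>
definition convex_C0_semigroup :: "(real \<Rightarrow> 'a::banach_lattice \<Rightarrow> 'a) \<Rightarrow> bool" where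
  "convex_C0_semigroup S \<longleftrightarrow>
     (\<forall>t\<ge>0. convex_op (S t) \<and> bounded_op (S t)) \<and>
     S 0 = id \<and>
     (\<forall>s\<ge>0. \<forall>t\<ge>0. S (t + s) = S t \<circ> S s) \<and>
     (\<forall>x. ((\<lambda>t. S t x) \<longlongrightarrow> x) (at_right 0))"

end

theory Submission
  imports Defs
begin

lemma bl_abs_nonneg: "0 \<le> sup a (- a :: 'a::banach_lattice)"
proof -
  let ?s = "sup a (-a)"
  have "a \<le> ?s" "-a \<le> ?s" by simp_all
  hence "a + -a \<le> ?s + ?s" by (rule add_mono)
  hence "0 \<le> ?s + ?s" by simp
  hence "(1/2::real) *\<^sub>R 0 \<le> (1/2::real) *\<^sub>R (?s + ?s)" by (rule scaleR_left_mono) simp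
  also have "(1/2::real) *\<^sub>R (?s + ?s) = ?s" by (simp add: scaleR_2[symmetric])
  finally show ?thesis by simp
qed

lemma bl_abs_of_nonneg: "0 \<le> (p::'a::banach_lattice) \<Longrightarrow> sup p (-p) = p"
  by (metis add_le_cancel_left add_minus_cancel add_mono_thms_linordered_semiring(1) minus_add_cancel sup.absorb1 sup.orderE neg_le_0_iff_le order.trans)

lemma bl_norm_abs: "norm (sup a (-a)) = norm (a::'a::banach_lattice)"
proof -
  have e: "sup (sup a (-a)) (- sup a (-a)) = sup a (-a)"
    by (rule bl_abs_of_nonneg[OF bl_abs_nonneg])
  show ?thesis
    by (metis e norm_lattice_mono order_refl antisym)
qed

lemma bl_sandwich:
  fixes a b c :: "'a::banach_lattice"
  assumes "a \<le> b" "b \<le> c"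
  shows "norm b \<le> norm a + norm c"
proof -
  let ?p = "sup a (-a) + sup c (-c)"
  have na: "0 \<le> sup a (-a)" "0 \<le> sup c (-c)" by (rule bl_abs_nonneg)+
  have "b \<le> ?p"
  proof -
    have "b \<le> sup c (-c)" using assms(2) by (meson order.trans sup.cobounded1)
    thus ?thesis using na(1) by (metis add_increasing)
  qed
  moreover have "-b \<le> ?p"
  proof -
    have "-b \<le> -a" using assms(1) by simp
    also have "-a \<le> sup a (-a)" by simp
    finally show ?thesis using na(2) by (metis add_increasing2)
  qed
  ultimately have "sup b (-b) \<le> ?p" by simp
  also have "?p = sup ?p (- ?p)" using na by (metis bl_abs_of_nonneg add_nonneg_nonneg)
  finally have "norm b \<le> norm ?p" by (rule norm_lattice_mono)
  also have "\<dots> \<le> norm (sup a (-a)) + norm (sup c (-c))" by (rule norm_triangle_ineq)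
  finally show ?thesis by (simp add: bl_norm_abs)
qed

lemma convex_half:
  fixes T :: "'a::banach_lattice \<Rightarrow> 'a"
  assumes conv: "convex_op T" and xy: "x \<noteq> y" and dp: "\<delta> > 0"
  defines "d \<equiv> norm (x - y)"
  defines "l \<equiv> d / (d + \<delta>)"
  shows "T x - T y \<le> l *\<^sub>R (T (x + (\<delta> / d) *\<^sub>R (x - y)) - T y)"
proof -
  let ?z = "x + (\<delta> / d) *\<^sub>R (x - y)"
  have d0: "d > 0" using xy by (simp add: d_def)
  have l0: "0 \<le> l" "l \<le> 1" using d0 dp by (auto simp: l_def field_simps)
  have k: "l * (\<delta> / d) = 1 - l" using d0 dp by (simp add: l_def field_simps)
  have "l *\<^sub>R ?z + (1 - l) *\<^sub>R y = l *\<^sub>R x + (l * (\<delta> / d)) *\<^sub>R (x - y) + (1 - l) *\<^sub>R y"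
    by (simp add: scaleR_add_right)
  also have "\<dots> = x" unfolding k by (simp add: algebra_simps)
  finally have eq: "l *\<^sub>R ?z + (1 - l) *\<^sub>R y = x" .
  have "T (l *\<^sub>R ?z + (1 - l) *\<^sub>R y) \<le> l *\<^sub>R T ?z + (1 - l) *\<^sub>R T y"
    using conv l0 unfolding convex_op_def by blast
  hence "T x \<le> l *\<^sub>R T ?z + (1 - l) *\<^sub>R T y" by (simp add: eq)
  thus ?thesis by (simp add: algebra_simps)
qed

lemma convex_lip:
  fixes T :: "'a::banach_lattice \<Rightarrow> 'a"
  assumes conv: "convex_op T"
    and bnd: "\<And>z. norm (z - c) \<le> R \<Longrightarrow> norm (T z) \<le> M"
    and x: "norm (x - c) \<le> r" and y: "norm (y - c) \<le> r" and rR: "r < R"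
  shows "norm (T x - T y) \<le> 4 * M * norm (x - y) / (R - r)"
proof (cases "x = y")
  case True
  have "0 \<le> M" using bnd[of c] rR x by (smt (verit) norm_ge_zero norm_zero right_minus_eq)
  then show ?thesis using True rR by simp
next
  case False
  define \<delta> where "\<delta> = R - r"
  have dp: "\<delta> > 0" using rR by (simp add: \<delta>_def)
  define d where "d = norm (x - y)"
  have d0: "d > 0" using False by (simp add: d_def)
  define l where "l = d / (d + \<delta>)"
  have l0: "0 \<le> l" using d0 dp by (simp add: l_def)
  define z where "z = x + (\<delta> / d) *\<^sub>R (x - y)"
  define z' where "z' = y + (\<delta> / d) *\<^sub>R (y - x)"
  have h1: "T x - T y \<le> l *\<^sub>R (T z - T y)"
    using convex_half[OF conv False dp] unfolding z_def l_def d_def by simp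
  have h2: "T y - T x \<le> l *\<^sub>R (T z' - T x)"
    using convex_half[OF conv, of y x \<delta>] False dp unfolding z'_def l_def d_def
    by (simp add: norm_minus_commute)
  have nz: "norm (z - c) \<le> R"
  proof -
    have "norm (z - c) \<le> norm (x - c) + norm ((\<delta> / d) *\<^sub>R (x - y))"
      unfolding z_def by (metis add.commute add_diff_eq norm_triangle_ineq diff_add_eq)
    also have "norm ((\<delta> / d) *\<^sub>R (x - y)) = \<delta>" using d0 dp by (simp add: d_def)
    finally show ?thesis using x by (simp add: \<delta>_def)
  qed
  have nz': "norm (z' - c) \<le> R"
  proof -
    have "norm (z' - c) \<le> norm (y - c) + norm ((\<delta> / d) *\<^sub>R (y - x))"
      unfolding z'_def by (metis add.commute add_diff_eq norm_triangle_ineq diff_add_eq)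
    also have "norm ((\<delta> / d) *\<^sub>R (y - x)) = \<delta>" using d0 dp by (simp add: d_def norm_minus_commute)
    finally show ?thesis using y by (simp add: \<delta>_def)
  qed
  have nx: "norm (x - c) \<le> R" "norm (y - c) \<le> R" using x y rR by auto
  have lo: "- (l *\<^sub>R (T z' - T x)) \<le> T x - T y" using h2 by (simp add: algebra_simps)
  have "norm (T x - T y) \<le> norm (- (l *\<^sub>R (T z' - T x))) + norm (l *\<^sub>R (T z - T y))"
    by (rule bl_sandwich[OF lo h1])
  also have "\<dots> = l * norm (T z' - T x) + l * norm (T z - T y)" using l0 by simp
  also have "\<dots> \<le> l * (2 * M) + l * (2 * M)"
  proof -
    have "norm (T z' - T x) \<le> 2 * M"
      using norm_triangle_ineq4[of "T z'" "T x"] bnd[OF nz'] bnd[OF nx(1)] by linarith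
    moreover have "norm (T z - T y) \<le> 2 * M"
      using norm_triangle_ineq4[of "T z" "T y"] bnd[OF nz] bnd[OF nx(2)] by linarith
    ultimately show ?thesis using l0 by (intro add_mono mult_left_mono) auto
  qed
  also have "\<dots> = 4 * M * l" by simp
  also have "\<dots> \<le> 4 * M * (d / \<delta>)"
  proof -
    have M0: "0 \<le> M" using bnd[OF nx(1)] by (meson norm_ge_zero order.trans)
    have "l \<le> d / \<delta>" using d0 dp unfolding l_def by (simp add: frac_le)
    hence "4 * M * l \<le> 4 * M * (d / \<delta>)" using M0 by (intro mult_left_mono) auto
    thus ?thesis by simp
  qed
  finally show ?thesis by (simp add: d_def \<delta>_def)
qed

lemma tendsto_lip:
  fixes f :: "'b \<Rightarrow> 'a::real_normed_vector" and g :: "'b \<Rightarrow> 'c::real_normed_vector"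
  assumes "(g \<longlongrightarrow> b) F" "\<forall>\<^sub>F h in F. norm (f h - a) \<le> L * norm (g h - b)"
  shows "(f \<longlongrightarrow> a) F"
proof -
  have "((\<lambda>h. g h - b) \<longlongrightarrow> 0) F" using assms(1) by (rule LIM_zero)
  hence "((\<lambda>h. norm (g h - b)) \<longlongrightarrow> 0) F" by (rule tendsto_norm_zero)
  hence "((\<lambda>h. L * norm (g h - b)) \<longlongrightarrow> 0) F" by (metis mult_zero_right tendsto_mult_left)
  hence "((\<lambda>h. f h - a) \<longlongrightarrow> 0) F" using assms(2) by (rule Lim_null_comparison[rotated])
  thus ?thesis by (rule LIM_zero_cancel)
qed

lemma op_lip_near:
  fixes T :: "'a::banach_lattice \<Rightarrow> 'a"
  assumes "convex_op T" "bounded_op T"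
  shows "\<exists>L. \<forall>y. norm (y - x) \<le> 1 \<longrightarrow> norm (T y - T x) \<le> L * norm (y - x)"
proof -
  obtain M where M: "\<And>z. norm z \<le> norm x + 2 \<Longrightarrow> norm (T z) \<le> M"
    using assms(2) unfolding bounded_op_def
    by (metis add_nonneg_pos norm_ge_zero zero_less_numeral)
  have "norm (T y - T x) \<le> 4 * M * norm (y - x)" if "norm (y - x) \<le> 1" for y
  proof -
    have "norm y \<le> norm x + 1" using that norm_triangle_ineq2[of y x] by linarith
    hence "norm (T y - T x) \<le> 4 * M * norm (y - x) / ((norm x + 2) - (norm x + 1))"
      by (intro convex_lip[OF assms(1), of 0]) (auto intro: M)
    thus ?thesis by simp
  qed
  thus ?thesis by blast
qed

lemma op_continuous:
  fixes T :: "'a::banach_lattice \<Rightarrow> 'a"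
  assumes "convex_op T" "bounded_op T"
  shows "isCont T x"
proof -
  obtain L where L: "\<And>y. norm (y - x) \<le> 1 \<Longrightarrow> norm (T y - T x) \<le> L * norm (y - x)"
    using op_lip_near[OF assms] by blast
  have ev: "\<forall>\<^sub>F y in at x. norm (y - x) \<le> 1"
    using eventually_at[of "\<lambda>y. norm (y - x) \<le> 1" x UNIV]
    by (metis dist_norm less_eq_real_def zero_less_one)
  have "(T \<longlongrightarrow> T x) (at x)"
    by (rule tendsto_lip[of "\<lambda>y. y" x _ _ _ L]) (auto intro: tendsto_ident_at eventually_mono[OF ev] L)
  thus ?thesis by (simp add: isCont_def)
qed

lemma convex_mid:
  assumes "convex_op T"
  shows "T ((1/2::real) *\<^sub>R (a + b)) \<le> (1/2::real) *\<^sub>R (T a + T b)"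
proof -
  have "T ((1/2::real) *\<^sub>R a + (1 - 1/2::real) *\<^sub>R b) \<le> (1/2::real) *\<^sub>R T a + (1 - 1/2::real) *\<^sub>R T b"
    using assms unfolding convex_op_def
    proof -
      assume h: "\<forall>x y. \<forall>l::real. 0 \<le> l \<and> l \<le> 1 \<longrightarrow> T (l *\<^sub>R x + (1 - l) *\<^sub>R y) \<le> l *\<^sub>R T x + (1 - l) *\<^sub>R T y"
      have "0 \<le> (1/2::real) \<and> (1/2::real) \<le> 1" by simp
      thus ?thesis using h by blast
    qed
  thus ?thesis by (simp add: scaleR_add_right)
qed

lemma baire_nat:
  fixes F :: "nat \<Rightarrow> 'a::banach set"
  assumes "\<And>n. closed (F n)" "\<And>y. \<exists>n. y \<in> F n"
  shows "\<exists>n. interior (F n) \<noteq> {}"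
proof (rule ccontr)
  assume "\<not> ?thesis"
  hence e: "\<And>n. interior (F n) = {}" by blast
  have "euclidean interior_of \<Union>(range F) = {}"
    by (rule Baire_category_alt) (auto simp: completely_metrizable_space_euclidean assms(1) e closed_closedin[symmetric])
  moreover have "\<Union>(range F) = UNIV" using assms(2) by blast
  ultimately show False by simp
qed

lemma local_lip:
  fixes S :: "real \<Rightarrow> 'a::banach_lattice \<Rightarrow> 'a"
  assumes sg: "convex_C0_semigroup S"
  shows "\<exists>\<delta>>0. \<exists>\<rho>>0. \<exists>L. \<forall>s. 0 \<le> s \<and> s \<le> \<delta> \<longrightarrow>
           (\<forall>y. norm (y - x) \<le> \<rho> \<longrightarrow> norm (S s y - S s x) \<le> L * norm (y - x))"
proof -
  have conv: "\<And>t. 0 \<le> t \<Longrightarrow> convex_op (S t)" and bd: "\<And>t. 0 \<le> t \<Longrightarrow> bounded_op (S t)"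
    and S0: "S 0 = id" and lim: "\<And>x. ((\<lambda>t. S t x) \<longlongrightarrow> x) (at_right 0)"
    using sg unfolding convex_C0_semigroup_def by auto
  define F where "F n = {y. \<forall>s\<in>{0..1/real (Suc n)}. norm (S s y) \<le> real n}" for n
  have cl: "closed (F n)" for n
  proof -
    have "F n = (\<Inter>s\<in>{0..1/real (Suc n)}. {y. norm (S s y) \<le> real n})" by (auto simp: F_def)
    moreover have "closed {y. norm (S s y) \<le> real n}" if "s \<in> {0..1/real (Suc n)}" for s
    proof -
      have "continuous_on UNIV (S s)" using op_continuous[OF conv bd] that
        by (simp add: continuous_at_imp_continuous_on)
      thus ?thesis by (intro closed_Collect_le continuous_intros) (auto intro: continuous_on_norm)
    qed
    ultimately show ?thesis by auto
  qed
  have cov: "\<exists>n. y \<in> F n" for y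
  proof -
    have "\<forall>\<^sub>F t in at_right 0. dist (S t y) y < 1" using lim[of y] by (simp add: tendstoD)
    then obtain b where b: "b > 0" "\<And>t. 0 < t \<Longrightarrow> t < b \<Longrightarrow> dist (S t y) y < 1"
      by (auto simp: eventually_at_right_field)
    obtain n where n: "max (1/b) (norm y + 1) < real n" using reals_Archimedean2 by blast
    have "1 / real (Suc n) < b"
    proof -
      have "1/b < real (Suc n)" using n by simp
      thus ?thesis using b(1) by (simp add: field_simps)
    qed
    moreover have "norm (S s y) \<le> real n" if "s \<in> {0..1/real (Suc n)}" "1 / real (Suc n) < b" for s
    proof (cases "s = 0")
      case True thus ?thesis using S0 n by simp
    next
      case False
      hence "dist (S s y) y < 1" using that b by auto
      hence "norm (S s y) \<le> norm y + 1" using norm_triangle_ineq2[of "S s y" y] by (simp add: dist_norm)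
      thus ?thesis using n by simp
    qed
    ultimately show ?thesis unfolding F_def by blast
  qed
  obtain n0 where "interior (F n0) \<noteq> {}" using baire_nat[OF cl cov] by blast
  then obtain y0 where "y0 \<in> interior (F n0)" by blast
  then obtain \<epsilon> where \<epsilon>: "\<epsilon> > 0" "ball y0 \<epsilon> \<subseteq> F n0" by (meson mem_interior)
  have B0: "norm (S s z) \<le> real n0" if "norm (z - y0) \<le> \<epsilon>/2" "0 \<le> s" "s \<le> 1/real (Suc n0)" for s z
  proof -
    have "z \<in> ball y0 \<epsilon>" using that \<epsilon> by (simp add: dist_norm norm_minus_commute)
    thus ?thesis using \<epsilon> that unfolding F_def by auto
  qed
  define w where "w = 2 *\<^sub>R x - y0"
  obtain m where m: "w \<in> F m" using cov by blast
  obtain k where k: "x \<in> F k" using cov by blast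
  define \<delta> where "\<delta> = min (1/real (Suc n0)) (min (1/real (Suc m)) (1/real (Suc k)))"
  have \<delta>0: "\<delta> > 0" by (simp add: \<delta>_def)
  define M where "M = 2 * real k + real m + real n0"
  have up: "\<exists>c. S s y \<le> c \<and> norm c \<le> (real m + real n0) / 2"
    if y: "norm (y - x) \<le> \<epsilon>/4" and s: "0 \<le> s" "s \<le> \<delta>" for s y
  proof -
    let ?z = "y0 + 2 *\<^sub>R (y - x)"
    have eq: "y = (1/2::real) *\<^sub>R (w + ?z)" by (simp add: w_def algebra_simps)
    have "S s y \<le> (1/2::real) *\<^sub>R (S s w + S s ?z)"
      using convex_mid[OF conv[OF s(1)], of w ?z] eq by simp
    moreover have "norm (S s w) \<le> real m" using m s unfolding F_def \<delta>_def by auto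
    moreover have "norm (S s ?z) \<le> real n0"
      by (rule B0) (use y s in \<open>auto simp: \<delta>_def\<close>)
    moreover have "norm ((1/2::real) *\<^sub>R (S s w + S s ?z)) \<le> (1/2) * (norm (S s w) + norm (S s ?z))"
      using norm_triangle_ineq[of "S s w" "S s ?z"] by simp
    ultimately show ?thesis by (intro exI[of _ "(1/2::real) *\<^sub>R (S s w + S s ?z)"]) auto
  qed
  have bnd: "norm (S s y) \<le> M" if y: "norm (y - x) \<le> \<epsilon>/4" and s: "0 \<le> s" "s \<le> \<delta>" for s y
  proof -
    obtain c where c: "S s y \<le> c" "norm c \<le> (real m + real n0) / 2" using up[OF y s] by blast
    have y': "norm ((2 *\<^sub>R x - y) - x) \<le> \<epsilon>/4" proof -
      have e: "(2 *\<^sub>R x - y) - x = x - y" by (simp add: scaleR_2 algebra_simps)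
      show ?thesis unfolding e using y by (simp add: norm_minus_commute)
    qed
    obtain c' where c': "S s (2 *\<^sub>R x - y) \<le> c'" "norm c' \<le> (real m + real n0) / 2" using up[OF y' s] by blast
    have "S s x \<le> (1/2::real) *\<^sub>R (S s y + S s (2 *\<^sub>R x - y))"
      using convex_mid[OF conv[OF s(1)], of y "2 *\<^sub>R x - y"] by (simp add: algebra_simps)
    hence "(2::real) *\<^sub>R S s x \<le> (2::real) *\<^sub>R ((1/2::real) *\<^sub>R (S s y + S s (2 *\<^sub>R x - y)))"
      by (rule scaleR_left_mono) simp
    hence "2 *\<^sub>R S s x \<le> S s y + S s (2 *\<^sub>R x - y)" by simp
    hence "2 *\<^sub>R S s x - S s (2 *\<^sub>R x - y) \<le> S s y"
      by (simp add: diff_le_eq)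
    moreover have "2 *\<^sub>R S s x - c' \<le> 2 *\<^sub>R S s x - S s (2 *\<^sub>R x - y)" using c'(1) by simp
    ultimately have lo: "2 *\<^sub>R S s x - c' \<le> S s y" by (rule order.trans[rotated])
    have nx: "norm (S s x) \<le> real k" using k s unfolding F_def \<delta>_def by auto
    have "norm (S s y) \<le> norm (2 *\<^sub>R S s x - c') + norm c" by (rule bl_sandwich[OF lo c(1)])
    also have "\<dots> \<le> 2 * norm (S s x) + norm c' + norm c"
      using norm_triangle_ineq4[of "2 *\<^sub>R S s x" c'] by simp
    finally show ?thesis using nx c(2) c'(2) by (simp add: M_def)
  qed
  have "norm (S s y - S s x) \<le> (4 * M / (\<epsilon>/4 - \<epsilon>/8)) * norm (y - x)"
    if "0 \<le> s \<and> s \<le> \<delta>" "norm (y - x) \<le> \<epsilon>/8" for s y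
  proof -
    have "norm (S s y - S s x) \<le> 4 * M * norm (y - x) / (\<epsilon>/4 - \<epsilon>/8)"
      by (rule convex_lip[OF conv, of s x "\<epsilon>/4" M _ "\<epsilon>/8"]) (use that \<epsilon> bnd in auto)
    thus ?thesis by simp
  qed
  hence H: "\<forall>s. 0 \<le> s \<and> s \<le> \<delta> \<longrightarrow> (\<forall>y. norm (y - x) \<le> \<epsilon>/8 \<longrightarrow>
      norm (S s y - S s x) \<le> (4 * M / (\<epsilon>/4 - \<epsilon>/8)) * norm (y - x))" by blast
  have pos: "\<epsilon>/8 > 0" using \<epsilon>(1) by simp
  show ?thesis using \<delta>0 pos H by blast
qed

theorem corollary2p5:
  fixes S :: "real \<Rightarrow> 'a::banach_lattice \<Rightarrow> 'a"
  assumes "convex_C0_semigroup S"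
  shows "\<forall>x. continuous_on {0..} (\<lambda>t. S t x)"
proof
  fix x
  have conv: "\<And>t. 0 \<le> t \<Longrightarrow> convex_op (S t)" and bd: "\<And>t. 0 \<le> t \<Longrightarrow> bounded_op (S t)"
    and S0: "S 0 = id" and semi: "\<And>s t. 0 \<le> s \<Longrightarrow> 0 \<le> t \<Longrightarrow> S (t + s) = S t \<circ> S s"
    and lim: "\<And>x. ((\<lambda>t. S t x) \<longlongrightarrow> x) (at_right 0)"
    using assms unfolding convex_C0_semigroup_def by auto
  have ic: "\<And>t y. 0 \<le> t \<Longrightarrow> isCont (S t) y" using op_continuous conv bd by blast
  have right: "((\<lambda>s. S s x) \<longlongrightarrow> S t x) (at_right t)" if t: "0 \<le> t" for t
  proof -
    have "((\<lambda>h. S t (S h x)) \<longlongrightarrow> S t x) (at_right 0)"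
      by (rule isCont_tendsto_compose[OF ic[OF t] lim])
    moreover have "\<forall>\<^sub>F h in at_right 0. S t (S h x) = S (h + t) x"
    proof -
      have "S t (S h x) = S (h + t) x" if "0 < h" for h
        using semi[of h t] that t by (simp add: add.commute)
      thus ?thesis by (auto simp: eventually_at_right_field intro!: exI[of _ 1])
    qed
    ultimately have "((\<lambda>h. S (h + t) x) \<longlongrightarrow> S t x) (at_right 0)"
      by (rule Lim_transform_eventually)
    thus ?thesis by (simp add: at_right_to_0[of t] filterlim_filtermap)
  qed
  obtain \<delta> \<rho> L where \<delta>: "\<delta> > 0" and \<rho>: "\<rho> > 0" and
    LL: "\<And>s y. 0 \<le> s \<Longrightarrow> s \<le> \<delta> \<Longrightarrow> norm (y - x) \<le> \<rho> \<Longrightarrow> norm (S s y - S s x) \<le> L * norm (y - x)"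
    using local_lip[OF assms, of x] by blast
  have left0: "((\<lambda>s. S s x) \<longlongrightarrow> S t x) (at_left t)" if t: "0 < t" "t \<le> \<delta>" for t
  proof -
    have fl: "filterlim (\<lambda>s. t - s) (at_right 0) (at_left t)"
    proof -
      have "((\<lambda>s. t - s) \<longlongrightarrow> t - t) (at_left t)" by (intro tendsto_intros)
      moreover have "\<forall>\<^sub>F s in at_left t. t - s \<in> {0<..} \<and> t - s \<noteq> 0"
        by (auto simp: eventually_at_left_field intro!: exI[of _ 0] t)
      ultimately show ?thesis by (simp add: filterlim_at)
    qed
    have g: "((\<lambda>s. S (t - s) x) \<longlongrightarrow> x) (at_left t)"
      using filterlim_compose[OF lim fl] .
    have ev1: "\<forall>\<^sub>F s in at_left t. norm (S (t - s) x - x) \<le> \<rho>"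
    proof -
      have "\<forall>\<^sub>F s in at_left t. dist (S (t - s) x) x < \<rho>" using tendstoD[OF g \<rho>] .
      thus ?thesis by (rule eventually_mono) (simp add: dist_norm)
    qed
    have ev2: "\<forall>\<^sub>F s in at_left t. 0 < s \<and> s < t"
      by (auto simp: eventually_at_left_field intro!: exI[of _ 0] t)
    have "\<forall>\<^sub>F s in at_left t. norm (S s x - S t x) \<le> L * norm (S (t - s) x - x)"
      using ev1 ev2
    proof eventually_elim
      case (elim s)
      have "S t x = S s (S (t - s) x)" using semi[of "t - s" s] elim by (simp add: o_def)
      thus ?case using LL[of s "S (t - s) x"] elim t
        by (simp add: norm_minus_commute)
    qed
    thus ?thesis by (rule tendsto_lip[OF g])
  qed
  have left: "((\<lambda>s. S s x) \<longlongrightarrow> S t x) (at_left t)" if t: "0 < t" for t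
  proof -
    define t' where "t' = min \<delta> t / 2"
    have t'0: "0 < t'" "t' \<le> \<delta>" "t' < t" using t \<delta> by (auto simp: t'_def)
    define a where "a = t - t'"
    have a0: "0 \<le> a" using t'0 by (simp add: a_def)
    have fl: "filterlim (\<lambda>s. s - a) (at_left t') (at_left t)"
    proof -
      have "((\<lambda>s. s - a) \<longlongrightarrow> t - a) (at_left t)" by (intro tendsto_intros)
      moreover have "\<forall>\<^sub>F s in at_left t. s - a \<in> {..<t'} \<and> s - a \<noteq> t'"
        by (auto simp: eventually_at_left_field a_def intro!: exI[of _ 0] t)
      ultimately show ?thesis by (simp add: filterlim_at a_def)
    qed
    have "((\<lambda>s. S (s - a) x) \<longlongrightarrow> S t' x) (at_left t)"
      using filterlim_compose[OF left0[OF t'0(1,2)] fl] .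
    hence "((\<lambda>s. S a (S (s - a) x)) \<longlongrightarrow> S a (S t' x)) (at_left t)"
      by (rule isCont_tendsto_compose[OF ic[OF a0]])
    moreover have "S a (S t' x) = S t x" using semi[of t' a] t'0 a0 by (simp add: a_def)
    moreover have "\<forall>\<^sub>F s in at_left t. S a (S (s - a) x) = S s x"
    proof -
      have "\<forall>\<^sub>F s in at_left t. a < s" 
        using t'0 by (auto simp: eventually_at_left_field a_def intro!: exI[of _ a])
      thus ?thesis
      proof eventually_elim
        case (elim s) thus ?case using semi[of "s - a" a] a0 by simp
      qed
    qed
    ultimately have "((\<lambda>s. S a (S (s - a) x)) \<longlongrightarrow> S t x) (at_left t)"
      "\<forall>\<^sub>F s in at_left t. S a (S (s - a) x) = S s x" by simp_all
    thus ?thesis by (rule Lim_transform_eventually)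
  qed
  show "continuous_on {0..} (\<lambda>t. S t x)"
    unfolding continuous_on_def
  proof
    fix t :: real assume "t \<in> {0..}"
    hence t: "0 \<le> t" by simp
    show "((\<lambda>t. S t x) \<longlongrightarrow> S t x) (at t within {0..})"
    proof (cases "t = 0")
      case True thus ?thesis using right[of 0] by (simp add: at_within_Ici_at_right)
    next
      case False
      hence "((\<lambda>t. S t x) \<longlongrightarrow> S t x) (at t)"
        using t by (intro filterlim_split_at left right) auto
      thus ?thesis by (rule tendsto_within_subset) simp
    qed
  qed
qed

end
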